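(* Let $R$ be an Artinian ring, with notation as in the context, and let $m,n\ge0$. For each $1\le k\le q$ let $S(k)\subset\{1,\dots,\mu_km\}$ be a subset with $\mu_kn$ elements. Then there exists an $R$-linear map $g\colon R^n\to R^m$ such that every column-adapted map $h\colon R^m\to R^n$ with $\mathfrak S(h,k)=S(k)$ for all $1\le k\le q$ satisfies $h\circ g=\mathrm{id}$.
   Context: Let $R$ be an Artinian ring, $J(R)$ its Jacobson radical, $\overline R=R/J(R)$, and $\bar x$ (resp. $\bar A$) the image of an element (resp. entrywise image of a matrix). $\overline R$ is semisimple, $\overline R\cong \mathrm{Mat}_{\mu_1}(\mathbb D_1)\times\cdots\times\mathrm{Mat}_{\mu_q}(\mathbb D_q)$ with division rings $\mathbb D_k$; put $\mu=\mu_1+\cdots+\mu_q$. Fix orthogonal idempotents $e^k_i\in R$ ($1\le k\le q$, $1\le i\le\mu_k$) with $\sum_{k,i}e^k_i=1$ lifting the orthogonal idempotents $\bar e^k_i$ of $\overline R$ given by the diagonal matrix units of this decomposition (so $e^k_iR\cong e^{k'}_{i'}R$ iff $k=k'$). Let $\mathbb L_{hk}=e^h_1Re^k_1$; then $\overline{\mathbb L_{kk}}=\mathbb D_k$ and $\overline{\mathbb L_{hk}}=0$ for $h\ne k$. The Peirce decomposition $R\cong\mathrm{End}(R_R)=\bigoplus\mathrm{Hom}(e^k_jR,e^h_iR)$, with the isomorphisms $e^h_iR\cong e^h_1R$, gives an injective ring homomorphism (the Artin–Wedderburn embedding) $\Phi\colon R\to\mathrm{Mat}_\mu(R)$, $x\mapsto(\Phi_{hk}(x))_{h,k=1}^q$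 a $q\times q$ block matrix with $\Phi_{hk}(x)\in\mathrm{Mat}_{\mu_h,\mu_k}(\mathbb L_{hk})$; its reduction $\overline\Phi\colon\overline R\to\mathrm{Mat}_\mu(\overline R)$ sends $\bar x$ to the block-diagonal matrix whose $k$-th block is the $\mathrm{Mat}_{\mu_k}(\mathbb D_k)$-component of $\bar x$. Vectors $R^n$ are columns (right $R$-modules); an $R$-linear $h\colon R^m\to R^n$ is an $n\times m$ matrix, and $\Phi(h)\in\mathrm{Mat}_{\mu n,\mu m}(R)$ is obtained by replacing each entry $x$ by $\Phi(x)$; similarly $\overline\Phi(\bar h)$. Distinguished basis: for $1\le k\le q$, $1\le a\le m$, $1\le r\le\mu_k$, let $\vec v(k)_{(a-1)\mu_k+r}$ be the standard basis vector of $R^{\mu m}$ of index $(a-1)\mu+\mu_1+\cdots+\mu_{k-1}+r$; define $\vec w(k)_i$ ($1\le i\le\mu_kn$) in $R^{\mu n}$ in the same way, bars denoting images in $\overline R^{\mu m},\overline R^{\mu n}$. For surjective $h$ and each $k$, $\mathfrak S(h,k)$ is the smallest, in the lexicographic order on increasingly sorted sequences, subset $S\subset\{1,\dots,\mu_km\}$ such that $\{\overline\Phi(\bar h)(\overline{\vec v(k)_j}):j\in S\}$ is a basis of the right $\mathbb D_k$-module $\bigoplus_{i=1}^{\mu_kn}\overline{\vec w(k)_i}\cdot\mathbb D_k$ (it has $\mu_kn$ elements). A surjective $R$-linear $h\colon R^m\to R^n$ is column-adapted if (i) for every $k$, writing $\mathfrak S(h,k)=\{j_1<\cdots<j_{\mu_kn}\}$,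 $\overline\Phi(\bar h)(\overline{\vec v(k)_{j_i}})=\overline{\vec w(k)_i}$ for all $i$, and (ii) $\Phi(h)(\vec v(k)_{j_i})=\vec w(k)_i$ for all $k$ and $1\le i\le\mu_kn$. *)

theory Defs
  imports "Jordan_Normal_Form.Matrix"
begin

text \<open>Conventions: all indices are 0-based. The paper's block index k = 1..q is k = 0..<q,
 the idempotent e^k_i (i = 1..mu_k) is e k i (i = 0..<mu k), so e^k_1 is e k 0.
 The index sets of the paper, subsets of 1..mu_k m, become subsets of 0..<mu_k m.\<close>

definition right_ideal :: "'a::ring_1 set \<Rightarrow> bool" where
  "right_ideal I \<longleftrightarrow> 0 \<in> I \<and> (\<forall>x\<in>I. \<forall>y\<in>I. x + y \<in> I) \<and> (\<forall>x\<in>I. - x \<in> I)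
     \<and> (\<forall>x\<in>I. \<forall>r. x * r \<in> I)"

definition right_artinian :: "'a::ring_1 itself \<Rightarrow> bool" where
  "right_artinian _ \<longleftrightarrow>
     (\<forall>I :: nat \<Rightarrow> 'a set. (\<forall>k. right_ideal (I k)) \<and> (\<forall>k. I (Suc k) \<subseteq> I k)
        \<longrightarrow> (\<exists>N. \<forall>k\<ge>N. I k = I N))"

definition maximal_right_ideal :: "'a::ring_1 set \<Rightarrow> bool" where
  "maximal_right_ideal I \<longleftrightarrow> right_ideal I \<and> I \<noteq> UNIV \<and>
     (\<forall>K. right_ideal K \<and> I \<subseteq> K \<longrightarrow> K = I \<or> K = UNIV)"

definition jacobson :: "'a::ring_1 set" where
  "jacobson = \<Inter> {I. maximal_right_ideal I}"

definition principal_right :: "'a::ring_1 \<Rightarrow> 'a set" where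
  "principal_right e = {e * x | x. True}"

definition iso_right_modules :: "'a::ring_1 set \<Rightarrow> 'a set \<Rightarrow> bool" where
  "iso_right_modules A B \<longleftrightarrow> (\<exists>\<phi>. bij_betw \<phi> A B \<and> (\<forall>x\<in>A. \<forall>y\<in>A. \<phi> (x + y) = \<phi> x + \<phi> y)
      \<and> (\<forall>x\<in>A. \<forall>r. \<phi> (x * r) = \<phi> x * r))"

definition corner :: "'a::ring_1 \<Rightarrow> 'a \<Rightarrow> 'a set" where
  "corner e f = {e * x * f | x. True}"

definition division_mod_jac :: "'a::ring_1 \<Rightarrow> bool" where
  "division_mod_jac e \<longleftrightarrow> e \<notin> jacobson \<and>
     (\<forall>x\<in>corner e e. x \<notin> jacobson \<longrightarrow>
        (\<exists>y\<in>corner e e. x * y - e \<in> jacobson \<and> y * x - e \<in> jacobson))"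

text \<open>The standing setup: orthogonal idempotents e k i (k < q, i < mu k) summing to 1,
 whose images in R/J are primitive (the corner rings are division rings mod J),
 with e k i R iso e k' i' R iff k = k', together with chosen isomorphisms
 e k i R \<cong> e k 0 R given by left multiplication by s k i (inverse: left mult. by t k i).\<close>
definition aw_setup :: "nat \<Rightarrow> (nat \<Rightarrow> nat) \<Rightarrow> (nat \<Rightarrow> nat \<Rightarrow> 'a::ring_1)
   \<Rightarrow> (nat \<Rightarrow> nat \<Rightarrow> 'a) \<Rightarrow> (nat \<Rightarrow> nat \<Rightarrow> 'a) \<Rightarrow> bool" where
  "aw_setup q \<mu> e s t \<longleftrightarrow>
     (\<forall>k<q. 0 < \<mu> k) \<and>
     (\<forall>k<q. \<forall>i<\<mu> k. e k i * e k i = e k i) \<and>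
     (\<forall>k<q. \<forall>i<\<mu> k. \<forall>k'<q. \<forall>i'<\<mu> k'. (k, i) \<noteq> (k', i') \<longrightarrow> e k i * e k' i' = 0) \<and>
     (\<Sum>k<q. \<Sum>i<\<mu> k. e k i) = 1 \<and>
     (\<forall>k<q. \<forall>i<\<mu> k. division_mod_jac (e k i)) \<and>
     (\<forall>k<q. \<forall>i<\<mu> k. \<forall>k'<q. \<forall>i'<\<mu> k'.
         iso_right_modules (principal_right (e k i)) (principal_right (e k' i')) \<longleftrightarrow> k = k') \<and>
     (\<forall>k<q. \<forall>i<\<mu> k. s k i \<in> corner (e k 0) (e k i) \<and> t k i \<in> corner (e k i) (e k 0) \<and>
         s k i * t k i = e k 0 \<and> t k i * s k i = e k i)"

definition off :: "(nat \<Rightarrow> nat) \<Rightarrow> nat \<Rightarrow> nat" where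
  "off \<mu> k = (\<Sum>l<k. \<mu> l)"

text \<open>Phi(x): a mu x mu matrix, mu = off mu q; row index off h + i stands for (h,i),
 column index off k + j for (k,j); entry = the (h,i),(k,j) Peirce component of x
 transported to Hom(e k 0 R, e h 0 R) = e h 0 R e k 0.\<close>
definition Phi_elem :: "nat \<Rightarrow> (nat \<Rightarrow> nat) \<Rightarrow> (nat \<Rightarrow> nat \<Rightarrow> 'a::ring_1)
   \<Rightarrow> (nat \<Rightarrow> nat \<Rightarrow> 'a) \<Rightarrow> 'a \<Rightarrow> 'a mat" where
  "Phi_elem q \<mu> s t x = mat (off \<mu> q) (off \<mu> q) (\<lambda>(p, p').
     \<Sum>h<q. \<Sum>i<\<mu> h. \<Sum>k<q. \<Sum>j<\<mu> k.
        (if p = off \<mu> h + i \<and> p' = off \<mu> k + j then s h i * x * t k j else 0))"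

definition Phi_map :: "nat \<Rightarrow> (nat \<Rightarrow> nat) \<Rightarrow> (nat \<Rightarrow> nat \<Rightarrow> 'a::ring_1)
   \<Rightarrow> (nat \<Rightarrow> nat \<Rightarrow> 'a) \<Rightarrow> 'a mat \<Rightarrow> 'a mat" where
  "Phi_map q \<mu> s t h = mat (off \<mu> q * dim_row h) (off \<mu> q * dim_col h) (\<lambda>(r, c).
     Phi_elem q \<mu> s t (h $$ (r div off \<mu> q, c div off \<mu> q)) $$ (r mod off \<mu> q, c mod off \<mu> q))"

text \<open>Distinguished basis: bvec q mu N k j is the vector v(k)_j (N = m) resp. w(k)_j (N = n);
 with j = a * mu k + r (a < N, r < mu k) it is the standard basis vector of index
 a * mu + off mu k + r in R^(mu N).\<close>
definition bvec :: "nat \<Rightarrow> (nat \<Rightarrow> nat) \<Rightarrow> nat \<Rightarrow> nat \<Rightarrow> nat \<Rightarrow> 'a::ring_1 vec" where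
  "bvec q \<mu> N k j = unit_vec (off \<mu> q * N) ((j div \<mu> k) * off \<mu> q + off \<mu> k + j mod \<mu> k)"

definition vcongJ :: "'a::ring_1 vec \<Rightarrow> 'a vec \<Rightarrow> bool" where
  "vcongJ x y \<longleftrightarrow> dim_vec x = dim_vec y \<and> (\<forall>i<dim_vec x. x $ i - y $ i \<in> jacobson)"

definition lincomb :: "nat \<Rightarrow> (nat \<Rightarrow> 'a::ring_1 vec) \<Rightarrow> (nat \<Rightarrow> 'a) \<Rightarrow> nat set \<Rightarrow> 'a vec" where
  "lincomb N u c A = vec N (\<lambda>r. \<Sum>j\<in>A. u j $ r * c j)"

text \<open>D_k is the image of L_kk = e k 0 R e k 0 in R/J; an element of D_k is represented by an
 element of L_kk. is_basis_sel h k S: S is a subset of 0..<mu_k m such that the images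
 of Phi(h) v(k)_j (j in S) form a basis of the right D_k-module sum_i wbar(k)_i D_k.\<close>
definition is_basis_sel :: "nat \<Rightarrow> (nat \<Rightarrow> nat) \<Rightarrow> (nat \<Rightarrow> nat \<Rightarrow> 'a::ring_1)
   \<Rightarrow> (nat \<Rightarrow> nat \<Rightarrow> 'a) \<Rightarrow> (nat \<Rightarrow> nat \<Rightarrow> 'a) \<Rightarrow> nat \<Rightarrow> nat \<Rightarrow> 'a mat \<Rightarrow> nat \<Rightarrow> nat set \<Rightarrow> bool" where
  "is_basis_sel q \<mu> e s t m n h k S \<longleftrightarrow>
     (let u = (\<lambda>j. Phi_map q \<mu> s t h *\<^sub>v bvec q \<mu> m k j);
          w = bvec q \<mu> n k;
          L = corner (e k 0) (e k 0);
          N = off \<mu> q * n in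
      S \<subseteq> {..<\<mu> k * m} \<and>
      (\<forall>j\<in>S. \<exists>d. (\<forall>i<\<mu> k * n. d i \<in> L) \<and> vcongJ (u j) (lincomb N w d {..<\<mu> k * n})) \<and>
      (\<forall>c. (\<forall>j\<in>S. c j \<in> L) \<and> vcongJ (lincomb N u c S) (0\<^sub>v N) \<longrightarrow> (\<forall>j\<in>S. c j \<in> jacobson)) \<and>
      (\<forall>d. (\<forall>i<\<mu> k * n. d i \<in> L) \<longrightarrow>
          (\<exists>c. (\<forall>j\<in>S. c j \<in> L) \<and> vcongJ (lincomb N u c S) (lincomb N w d {..<\<mu> k * n}))))"

definition frakS :: "nat \<Rightarrow> (nat \<Rightarrow> nat) \<Rightarrow> (nat \<Rightarrow> nat \<Rightarrow> 'a::ring_1)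
   \<Rightarrow> (nat \<Rightarrow> nat \<Rightarrow> 'a) \<Rightarrow> (nat \<Rightarrow> nat \<Rightarrow> 'a) \<Rightarrow> nat \<Rightarrow> nat \<Rightarrow> 'a mat \<Rightarrow> nat \<Rightarrow> nat set" where
  "frakS q \<mu> e s t m n h k = (THE S. is_basis_sel q \<mu> e s t m n h k S \<and>
      (\<forall>S'. is_basis_sel q \<mu> e s t m n h k S' \<longrightarrow>
          S = S' \<or> (sorted_list_of_set S, sorted_list_of_set S') \<in> lexord {(a, b). a < b}))"

definition surjective_map :: "nat \<Rightarrow> nat \<Rightarrow> 'a::ring_1 mat \<Rightarrow> bool" where
  "surjective_map m n h \<longleftrightarrow> (\<forall>y\<in>carrier_vec n. \<exists>x\<in>carrier_vec m. h *\<^sub>v x = y)"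

definition column_adapted :: "nat \<Rightarrow> (nat \<Rightarrow> nat) \<Rightarrow> (nat \<Rightarrow> nat \<Rightarrow> 'a::ring_1)
   \<Rightarrow> (nat \<Rightarrow> nat \<Rightarrow> 'a) \<Rightarrow> (nat \<Rightarrow> nat \<Rightarrow> 'a) \<Rightarrow> nat \<Rightarrow> nat \<Rightarrow> 'a mat \<Rightarrow> bool" where
  "column_adapted q \<mu> e s t m n h \<longleftrightarrow>
     h \<in> carrier_mat n m \<and> surjective_map m n h \<and>
     (\<forall>k<q. let js = sorted_list_of_set (frakS q \<mu> e s t m n h k) in
        length js = \<mu> k * n \<and>
        (\<forall>i<\<mu> k * n. vcongJ (Phi_map q \<mu> s t h *\<^sub>v bvec q \<mu> m k (js ! i)) (bvec q \<mu> n k i)) \<and>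
        (\<forall>i<\<mu> k * n. Phi_map q \<mu> s t h *\<^sub>v bvec q \<mu> m k (js ! i) = bvec q \<mu> n k i))"

end

theory Submission imports Defs begin

lemma off_Suc: "off \<mu> (Suc k) = off \<mu> k + \<mu> k"
  by (simp add: off_def)

lemma off_mono: "k \<le> k' \<Longrightarrow> off \<mu> k \<le> off \<mu> k'"
  unfolding off_def by (rule sum_mono2) auto

lemma off_lt: "k < k' \<Longrightarrow> i < \<mu> k \<Longrightarrow> off \<mu> k + i < off \<mu> k'"
  using off_mono[of "Suc k" k' \<mu>] off_Suc[of \<mu> k] by simp

lemma off_inj:
  assumes "i < \<mu> h" "i' < \<mu> h'" "off \<mu> h + i = off \<mu> h' + i'"
  shows "h = h' \<and> i = i'"
proof -
  have "\<not> h < h'" using off_lt[of h h' i \<mu>] assms off_mono[of h' h' \<mu>] by auto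
  moreover have "\<not> h' < h" using off_lt[of h' h i' \<mu>] assms by auto
  ultimately show ?thesis using assms by auto
qed

lemma sum_if_const: "(\<Sum>x\<in>A. if P then f x else 0) = (if P then sum f A else 0)"
  by simp

lemma Phi_elem_index:
  assumes "h < q" "i < \<mu> h" "k < q" "j < \<mu> k"
  shows "Phi_elem q \<mu> s t x $$ (off \<mu> h + i, off \<mu> k + j) = s h i * x * t k j"
proof -
  have b1: "off \<mu> h + i < off \<mu> q" "off \<mu> k + j < off \<mu> q" using assms off_lt by auto
  have "(\<Sum>h'<q. \<Sum>i'<\<mu> h'. \<Sum>k'<q. \<Sum>j'<\<mu> k'.
        (if off \<mu> h + i = off \<mu> h' + i' \<and> off \<mu> k + j = off \<mu> k' + j' then s h' i' * x * t k' j' else 0))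
     = (\<Sum>h'<q. \<Sum>i'<\<mu> h'. \<Sum>k'<q. \<Sum>j'<\<mu> k'.
        (if h' = h \<and> i' = i \<and> k' = k \<and> j' = j then s h i * x * t k j else 0))"
    apply (intro sum.cong refl)
    using off_inj[of i \<mu> h] off_inj[of j \<mu> k] assms by auto
  also have "\<dots> = s h i * x * t k j"
    using assms by (simp add: sum_if_const if_if_eq_conj[symmetric] sum.delta cong: if_cong)
  finally show ?thesis unfolding Phi_elem_def using b1 by simp
qed

lemma Phi_map_index:
  assumes "a < dim_row H" "b < dim_col H" "p < off \<mu> q" "p' < off \<mu> q"
  shows "Phi_map q \<mu> s t H $$ (a * off \<mu> q + p, b * off \<mu> q + p') = Phi_elem q \<mu> s t (H $$ (a, b)) $$ (p, p')"
proof -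
  let ?M = "off \<mu> q"
  have "a * ?M + p < ?M * dim_row H"
    by (metis assms(1,3) add.commute mult.commute mult_Suc_right less_eq_Suc_le add_less_le_mono mult_le_mono2 nat_add_left_cancel_less)
  moreover have "b * ?M + p' < ?M * dim_col H"
    by (metis assms(2,4) add.commute mult.commute mult_Suc_right less_eq_Suc_le add_less_le_mono mult_le_mono2 nat_add_left_cancel_less)
  ultimately show ?thesis unfolding Phi_map_def using assms by simp
qed

lemma col_entry:
  assumes H: "H \<in> carrier_mat n m" and k: "k < q" "j < \<mu> k * m"
    and a': "a' < n" "h' < q" "i' < \<mu> h'"
  shows "(Phi_map q \<mu> s t H *\<^sub>v bvec q \<mu> m k j) $ (a' * off \<mu> q + off \<mu> h' + i')
     = s h' i' * H $$ (a', j div \<mu> k) * t k (j mod \<mu> k)"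
proof -
  let ?M = "off \<mu> q"
  have mk: "0 < \<mu> k" using k by (metis gr0I mult_0 not_less_zero)
  have jd: "j div \<mu> k < m" using k mk by (simp add: less_mult_imp_div_less mult.commute)
  have jm: "j mod \<mu> k < \<mu> k" using mk by simp
  have p1: "off \<mu> h' + i' < ?M" using a' off_lt by blast
  have p2: "off \<mu> k + j mod \<mu> k < ?M" using k jm off_lt by blast
  have r1: "a' * ?M + (off \<mu> h' + i') < ?M * n"
    by (metis a'(1) p1 add.commute mult.commute mult_Suc_right less_eq_Suc_le add_less_le_mono mult_le_mono2 nat_add_left_cancel_less)
  have c1: "j div \<mu> k * ?M + (off \<mu> k + j mod \<mu> k) < ?M * m"
    by (metis jd p2 add.commute mult.commute mult_Suc_right less_eq_Suc_le add_less_le_mono mult_le_mono2 nat_add_left_cancel_less)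
  have "(Phi_map q \<mu> s t H *\<^sub>v bvec q \<mu> m k j) $ (a' * ?M + (off \<mu> h' + i'))
     = Phi_map q \<mu> s t H $$ (a' * ?M + (off \<mu> h' + i'), j div \<mu> k * ?M + (off \<mu> k + j mod \<mu> k))"
    using H r1 c1 unfolding bvec_def by (simp add: Phi_map_def add.assoc)
  also have "\<dots> = s h' i' * H $$ (a', j div \<mu> k) * t k (j mod \<mu> k)"
    using Phi_map_index[of a' H "j div \<mu> k" "off \<mu> h' + i'" \<mu> q "off \<mu> k + j mod \<mu> k" s t] H a' jd p1 p2
      Phi_elem_index[of h' q i' \<mu> k "j mod \<mu> k" s t] k jm by simp
  finally show ?thesis by (simp add: add.assoc)
qed

lemma bvec_entry:
  assumes k: "k < q" "i < \<mu> k * n" and a': "a' < n" "h' < q" "i' < \<mu> h'"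
  shows "(bvec q \<mu> n k i :: 'a::ring_1 vec) $ (a' * off \<mu> q + off \<mu> h' + i')
     = (if a' = i div \<mu> k \<and> h' = k \<and> i' = i mod \<mu> k then 1 else 0)"
proof -
  let ?M = "off \<mu> q"
  have mk: "0 < \<mu> k" using k by (metis gr0I mult_0 not_less_zero)
  have jd: "i div \<mu> k < n" using k mk by (simp add: less_mult_imp_div_less mult.commute)
  have jm: "i mod \<mu> k < \<mu> k" using mk by simp
  have p1: "off \<mu> h' + i' < ?M" using a' off_lt by blast
  have p2: "off \<mu> k + i mod \<mu> k < ?M" using k jm off_lt by blast
  have r1: "a' * ?M + (off \<mu> h' + i') < ?M * n"
    by (metis a'(1) p1 add.commute mult.commute mult_Suc_right less_eq_Suc_le add_less_le_mono mult_le_mono2 nat_add_left_cancel_less)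
  have c1: "i div \<mu> k * ?M + (off \<mu> k + i mod \<mu> k) < ?M * n"
    by (metis jd p2 add.commute mult.commute mult_Suc_right less_eq_Suc_le add_less_le_mono mult_le_mono2 nat_add_left_cancel_less)
  have eq: "(a' * ?M + (off \<mu> h' + i') = i div \<mu> k * ?M + (off \<mu> k + i mod \<mu> k))
      \<longleftrightarrow> (a' = i div \<mu> k \<and> h' = k \<and> i' = i mod \<mu> k)"
  proof
    assume e: "a' * ?M + (off \<mu> h' + i') = i div \<mu> k * ?M + (off \<mu> k + i mod \<mu> k)"
    have "(a' * ?M + (off \<mu> h' + i')) div ?M = a'" "(a' * ?M + (off \<mu> h' + i')) mod ?M = off \<mu> h' + i'"
      using p1 by auto
    moreover have "(i div \<mu> k * ?M + (off \<mu> k + i mod \<mu> k)) div ?M = i div \<mu> k"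
        "(i div \<mu> k * ?M + (off \<mu> k + i mod \<mu> k)) mod ?M = off \<mu> k + i mod \<mu> k"
      using p2 by auto
    ultimately have "a' = i div \<mu> k" "off \<mu> h' + i' = off \<mu> k + i mod \<mu> k" using e by metis+
    then show "a' = i div \<mu> k \<and> h' = k \<and> i' = i mod \<mu> k" using off_inj[of i' \<mu> h' "i mod \<mu> k" k] a' jm by auto
  qed auto
  show ?thesis unfolding bvec_def using r1 c1 eq by (simp add: add.assoc)
qed

lemma one_split:
  assumes "aw_setup q \<mu> e s t"
  shows "(\<Sum>k<q. \<Sum>i<\<mu> k. t k i * s k i) = (1::'a::ring_1)"
  using assms unfolding aw_setup_def by (metis (no_types, lifting) lessThan_iff sum.cong)

lemma key:
  assumes aw: "aw_setup q \<mu> e s (t :: nat \<Rightarrow> nat \<Rightarrow> 'a::ring_1)"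
    and H: "H \<in> carrier_mat n m" and k: "k < q" "j < \<mu> k * m" "a < n" "r < \<mu> k" "a' < n"
    and eqv: "Phi_map q \<mu> s t H *\<^sub>v bvec q \<mu> m k j = bvec q \<mu> n k (a * \<mu> k + r)"
  shows "H $$ (a', j div \<mu> k) * t k (j mod \<mu> k) = (if a' = a then t k r else 0)"
proof -
  let ?x = "H $$ (a', j div \<mu> k) * t k (j mod \<mu> k)"
  have i: "a * \<mu> k + r < \<mu> k * n"
    by (metis k(3,4) add.commute mult.commute mult_Suc_right less_eq_Suc_le add_less_le_mono mult_le_mono2 nat_add_left_cancel_less)
  have dm: "(a * \<mu> k + r) div \<mu> k = a" "(a * \<mu> k + r) mod \<mu> k = r" using k(4) by auto
  have ent: "s h' i' * ?x = (if a' = a \<and> h' = k \<and> i' = r then 1 else 0)" if "h' < q" "i' < \<mu> h'" for h' i'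
  proof -
    have "s h' i' * ?x = (Phi_map q \<mu> s t H *\<^sub>v bvec q \<mu> m k j) $ (a' * off \<mu> q + off \<mu> h' + i')"
      using col_entry[OF H k(1,2) k(5) that] by (simp add: mult.assoc)
    also have "\<dots> = (if a' = a \<and> h' = k \<and> i' = r then 1 else 0)"
      unfolding eqv using bvec_entry[OF k(1) i k(5) that] dm by simp
    finally show ?thesis .
  qed
  have "?x = (\<Sum>h'<q. \<Sum>i'<\<mu> h'. t h' i' * s h' i') * ?x" using one_split[OF aw] by simp
  also have "\<dots> = (\<Sum>h'<q. \<Sum>i'<\<mu> h'. t h' i' * (s h' i' * ?x))"
    by (simp add: sum_distrib_right mult.assoc)
  also have "\<dots> = (\<Sum>h'<q. \<Sum>i'<\<mu> h'. if h' = k \<and> i' = r then (if a' = a then t k r else 0) else 0)"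
    by (intro sum.cong refl) (auto simp: ent)
  also have "\<dots> = (if a' = a then t k r else 0)"
    using k by (simp add: sum_if_const if_if_eq_conj[symmetric] sum.delta cong: if_cong)
  finally show ?thesis .
qed

theorem lemma4p4:
  fixes e s t :: "nat \<Rightarrow> nat \<Rightarrow> 'a::ring_1"
    and q m n :: nat and \<mu> :: "nat \<Rightarrow> nat" and S :: "nat \<Rightarrow> nat set"
  assumes "right_artinian TYPE('a)"
    and "aw_setup q \<mu> e s t"
    and "\<forall>k<q. S k \<subseteq> {..<\<mu> k * m} \<and> card (S k) = \<mu> k * n"
  shows "\<exists>g \<in> carrier_mat m n. \<forall>h. column_adapted q \<mu> e s t m n h \<and>
           (\<forall>k<q. frakS q \<mu> e s t m n h k = S k) \<longrightarrow> h * g = 1\<^sub>m n"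
proof -
  note aw = assms(2)
  define J where "J k i = sorted_list_of_set (S k) ! i" for k i
  define B where "B k a r = J k (a * \<mu> k + r) div \<mu> k" for k a r
  define R0 where "R0 k a r = J k (a * \<mu> k + r) mod \<mu> k" for k a r
  define g where "g = mat m n (\<lambda>(b, a). \<Sum>k<q. \<Sum>r<\<mu> k.
      if B k a r = b then t k (R0 k a r) * s k r else (0::'a))"
  have Jlt: "J k i < \<mu> k * m" if "k < q" "i < \<mu> k * n" for k i
  proof -
    have fin: "finite (S k)" using assms(3) that(1) finite_subset by blast
    have "i < length (sorted_list_of_set (S k))" using assms(3) that by simp
    then have "J k i \<in> S k" unfolding J_def using fin by (metis nth_mem set_sorted_list_of_set)
    then show ?thesis using assms(3) that(1) by auto
  qed
  have Blt: "B k a r < m" if "k < q" "a < n" "r < \<mu> k" for k a r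
  proof -
    have i: "a * \<mu> k + r < \<mu> k * n"
      by (metis that(2,3) add.commute mult.commute mult_Suc_right less_eq_Suc_le add_less_le_mono mult_le_mono2 nat_add_left_cancel_less)
    have "0 < \<mu> k" using that(3) by simp
    then show ?thesis unfolding B_def using Jlt[OF that(1) i] by (simp add: less_mult_imp_div_less mult.commute)
  qed
  have "g \<in> carrier_mat m n" unfolding g_def by simp
  moreover have "h * g = 1\<^sub>m n" if ca: "column_adapted q \<mu> e s t m n h"
     and fS: "\<forall>k<q. frakS q \<mu> e s t m n h k = S k" for h
  proof -
    have H: "h \<in> carrier_mat n m" using ca unfolding column_adapted_def by simp
    have eqv: "Phi_map q \<mu> s t h *\<^sub>v bvec q \<mu> m k (J k i) = bvec q \<mu> n k i"
      if "k < q" "i < \<mu> k * n" for k i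
      using ca that fS unfolding column_adapted_def J_def Let_def by auto
    have K: "h $$ (a', B k a r) * t k (R0 k a r) = (if a' = a then t k r else 0)"
      if "k < q" "a < n" "r < \<mu> k" "a' < n" for k a r a'
    proof -
      have i: "a * \<mu> k + r < \<mu> k * n"
        by (metis that(2,3) add.commute mult.commute mult_Suc_right less_eq_Suc_le add_less_le_mono mult_le_mono2 nat_add_left_cancel_less)
      show ?thesis unfolding B_def R0_def
        by (rule key[OF aw H that(1) Jlt[OF that(1) i] that(2,3,4) eqv[OF that(1) i]])
    qed
    show ?thesis
    proof (rule eq_matI)
      fix a' a assume a': "a' < dim_row (1\<^sub>m n :: 'a mat)" and a: "a < dim_col (1\<^sub>m n :: 'a mat)"
      have "(h * g) $$ (a', a) = (\<Sum>b<m. h $$ (a', b) * g $$ (b, a))"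
        using H a a' unfolding g_def by (simp add: scalar_prod_def atLeast0LessThan)
      also have "\<dots> = (\<Sum>b<m. \<Sum>k<q. \<Sum>r<\<mu> k. if B k a r = b then h $$ (a', b) * (t k (R0 k a r) * s k r) else 0)"
        using a unfolding g_def by (simp add: sum_distrib_left if_distrib cong: if_cong)
      also have "\<dots> = (\<Sum>k<q. \<Sum>r<\<mu> k. \<Sum>b<m. if B k a r = b then h $$ (a', b) * (t k (R0 k a r) * s k r) else 0)"
        by (subst sum.swap) (rule sum.cong[OF refl], rule sum.swap)
      also have "\<dots> = (\<Sum>k<q. \<Sum>r<\<mu> k. h $$ (a', B k a r) * t k (R0 k a r) * s k r)"
        using a by (intro sum.cong refl) (simp add: Blt mult.assoc)
      also have "\<dots> = (\<Sum>k<q. \<Sum>r<\<mu> k. if a' = a then t k r * s k r else 0)"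
        by (intro sum.cong refl) (use a a' in \<open>simp add: K\<close>)
      also have "\<dots> = 1\<^sub>m n $$ (a', a)"
        using a a' one_split[OF aw] by (simp add: sum_if_const)
      finally show "(h * g) $$ (a', a) = 1\<^sub>m n $$ (a', a)" .
    qed (use H in \<open>auto simp: g_def\<close>)
  qed
  ultimately show ?thesis by blast
qed

end
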